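(* Let $\mathbf{R}$ be a real closed field, $\mathbf{C}=\mathbf{R}(\sqrt{-1})$, and let $(\mathcal{A},* )$ be a $(\mathbf{C},* )$-algebra. Let $n$ be a positive integer and equip $M_n(\mathcal{A})$ with the involution $(a_{ij})^*=(a_{ji}^* )$. Then $(\mathcal{A},* )$ is real reduced if and only if $(M_n(\mathcal{A}),* )$ is real reduced.
   Context: A $*$-ring is an associative unital ring with an involution $*$ satisfying $(a+b)^*=a^*+b^*$, $(ab)^*=b^*a^*$, $(a^* )^*=a$. The field $\mathbf{C}$ carries the conjugation involution over $\mathbf{R}$ ($\sqrt{-1}\mapsto-\sqrt{-1}$). A $(\mathbf{C},* )$-algebra is a $*$-ring $(\mathcal{A},* )$ together with a $*$-homomorphism $\mathbf{C}\to\mathcal{A}$ whose image lies in the center of $\mathcal{A}$. A $*$-ring $(\mathcal{A},* )$ is real reduced if for any finitely many $a_1,\dots,a_k\in\mathcal{A}$, $\sum_i a_i^*a_i=0$ implies $a_i=0$ for all $i$. *)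

theory Defs
  imports "HOL-Analysis.Analysis" "HOL-Computational_Algebra.Polynomial"
begin

section \<open>Real closed fields\<close>

text \<open>A field is real closed iff it is formally real (-1 is not a sum of squares),
  every element is a square or the negative of a square, and every polynomial
  of odd degree has a root (standard equivalent definition, cf. Bochnak-Coste-Roy 1.2.2).\<close>

definition formally_real :: "'r::field itself \<Rightarrow> bool" where
  "formally_real _ \<longleftrightarrow>
     (\<forall>k (x::nat \<Rightarrow> 'r). (\<Sum>i<k. (x i)^2) \<noteq> -1)"

definition real_closed_field :: "'r::field itself \<Rightarrow> bool" where
  "real_closed_field T \<longleftrightarrow>
     formally_real T \<and>
     (\<forall>a::'r. \<exists>b. a = b^2 \<or> a = - (b^2)) \<and>
     (\<forall>p::'r poly. odd (degree p) \<longrightarrow> (\<exists>x. poly p x = 0))"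

section \<open>C = R(sqrt -1), represented as pairs (x,y) meaning x + y sqrt(-1)\<close>

definition cadd :: "'r::field \<times> 'r \<Rightarrow> 'r \<times> 'r \<Rightarrow> 'r \<times> 'r" where
  "cadd z w = (fst z + fst w, snd z + snd w)"

definition cmult :: "'r::field \<times> 'r \<Rightarrow> 'r \<times> 'r \<Rightarrow> 'r \<times> 'r" where
  "cmult z w = (fst z * fst w - snd z * snd w, fst z * snd w + snd z * fst w)"

definition cone :: "'r::field \<times> 'r" where
  "cone = (1, 0)"

definition cconj :: "'r::field \<times> 'r \<Rightarrow> 'r \<times> 'r" where
  "cconj z = (fst z, - snd z)"

section \<open>*-rings, (C,*)-algebras, real reducedness\<close>

definition star_ring :: "('a::ring_1 \<Rightarrow> 'a) \<Rightarrow> bool" where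
  "star_ring st \<longleftrightarrow>
     (\<forall>a b. st (a + b) = st a + st b) \<and>
     (\<forall>a b. st (a * b) = st b * st a) \<and>
     (\<forall>a. st (st a) = a)"

text \<open>A (C,*)-algebra: a *-ring with a unital *-homomorphism from C = R(sqrt -1)
  whose image is central.\<close>

definition C_star_algebra :: "('r::field \<times> 'r \<Rightarrow> 'a::ring_1) \<Rightarrow> ('a \<Rightarrow> 'a) \<Rightarrow> bool" where
  "C_star_algebra \<phi> st \<longleftrightarrow>
     star_ring st \<and>
     (\<forall>z w. \<phi> (cadd z w) = \<phi> z + \<phi> w) \<and>
     (\<forall>z w. \<phi> (cmult z w) = \<phi> z * \<phi> w) \<and>
     \<phi> cone = 1 \<and>
     (\<forall>z. \<phi> (cconj z) = st (\<phi> z)) \<and>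
     (\<forall>z a. \<phi> z * a = a * \<phi> z)"

text \<open>Real reduced, with respect to an explicit multiplication and involution
  (so that it applies both to the ring 'a and to the matrix ring with product **).\<close>

definition real_reduced_wrt :: "('a::comm_monoid_add \<Rightarrow> 'a \<Rightarrow> 'a) \<Rightarrow> ('a \<Rightarrow> 'a) \<Rightarrow> bool" where
  "real_reduced_wrt mul st \<longleftrightarrow>
     (\<forall>k (a::nat \<Rightarrow> 'a). (\<Sum>i<k. mul (st (a i)) (a i)) = 0 \<longrightarrow> (\<forall>i<k. a i = 0))"

text \<open>Involution on M_n(A), n x n matrices indexed by the finite type 'n:
  (a_ij)^* = (a_ji^*).\<close>

definition mat_star :: "('a \<Rightarrow> 'a) \<Rightarrow> 'a ^'n ^'n \<Rightarrow> 'a ^'n ^'n" where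
  "mat_star st M = (\<chi> i j. st (M $ j $ i))"

end

theory Submission
  imports Defs
begin

lemma rr_finite:
  assumes rr: "real_reduced_wrt ((*) :: 'a::ring_1 \<Rightarrow> 'a \<Rightarrow> 'a) st"
    and fin: "finite S" and s: "(\<Sum>x\<in>S. st (f x) * f x) = 0" and x: "x \<in> S"
  shows "f x = 0"
proof -
  obtain h where h: "bij_betw h {0..<card S} S" using ex_bij_betw_nat_finite[OF fin] by blast
  have "(\<Sum>i<card S. st (f (h i)) * f (h i)) = (\<Sum>x\<in>S. st (f x) * f x)"
    using sum.reindex_bij_betw[OF h, of "\<lambda>x. st (f x) * f x"] by (simp add: lessThan_atLeast0)
  with s have "(\<Sum>i<card S. st ((f \<circ> h) i) * (f \<circ> h) i) = 0" unfolding o_def by simp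
  hence "\<forall>i<card S. (f \<circ> h) i = 0" using rr unfolding real_reduced_wrt_def by blast
  hence "\<forall>i<card S. f (h i) = 0" by simp
  moreover obtain i where "i < card S" "h i = x" using h x unfolding bij_betw_def by force
  ultimately show ?thesis by auto
qed

theorem lemma7:
  fixes \<phi> :: "'r::field \<times> 'r \<Rightarrow> 'a::ring_1"
    and st :: "'a \<Rightarrow> 'a"
  assumes "real_closed_field TYPE('r)"
    and "C_star_algebra \<phi> st"
  shows "real_reduced_wrt ((*) :: 'a \<Rightarrow> 'a \<Rightarrow> 'a) st \<longleftrightarrow>
         real_reduced_wrt ((**) :: 'a ^'n::finite ^'n \<Rightarrow> 'a ^'n ^'n \<Rightarrow> 'a ^'n ^'n) (mat_star st)"
proof
  have sr: "star_ring st" using assms(2) unfolding C_star_algebra_def by blast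
  have st0: "st 0 = 0"
  proof -
    have "st (0 + 0) = st 0 + st 0" using sr unfolding star_ring_def by blast
    thus ?thesis by simp
  qed
  {
    assume rr: "real_reduced_wrt ((*) :: 'a \<Rightarrow> 'a \<Rightarrow> 'a) st"
    show "real_reduced_wrt ((**) :: 'a ^'n::finite ^'n \<Rightarrow> 'a ^'n ^'n \<Rightarrow> 'a ^'n ^'n) (mat_star st)"
      unfolding real_reduced_wrt_def
    proof (intro allI impI)
      fix k and M :: "nat \<Rightarrow> 'a ^'n ^'n" and l
      assume s: "(\<Sum>i<k. mat_star st (M i) ** M i) = 0" and l: "l < k"
      have "\<forall>i j. M l $ i $ j = 0"
      proof (intro allI)
        fix i j
        have "(\<Sum>p<k. (mat_star st (M p) ** M p) $ j $ j) = 0"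
          using arg_cong[OF s, of "\<lambda>A. A $ j $ j"] by (simp add: sum_component)
        hence "(\<Sum>p<k. \<Sum>q\<in>UNIV. st (M p $ q $ j) * M p $ q $ j) = 0"
          by (simp add: matrix_matrix_mult_def mat_star_def)
        hence "(\<Sum>x\<in>{..<k} \<times> UNIV. st (M (fst x) $ snd x $ j) * M (fst x) $ snd x $ j) = 0"
          unfolding sum.cartesian_product by (simp only: split_def)
        from rr_finite[OF rr _ this, of "(l,i)"] l show "M l $ i $ j = 0" by auto
      qed
      thus "M l = 0" by (simp add: vec_eq_iff)
    qed
  }
  {
    assume rr: "real_reduced_wrt ((**) :: 'a ^'n::finite ^'n \<Rightarrow> 'a ^'n ^'n \<Rightarrow> 'a ^'n ^'n) (mat_star st)"
    show "real_reduced_wrt ((*) :: 'a \<Rightarrow> 'a \<Rightarrow> 'a) st"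
      unfolding real_reduced_wrt_def
    proof (intro allI impI)
      fix k and a :: "nat \<Rightarrow> 'a" and l
      assume s: "(\<Sum>i<k. st (a i) * a i) = 0" and l: "l < k"
      obtain j0 :: 'n where True by blast
      define M where "M = (\<lambda>p. (\<chi> r c. if r = j0 \<and> c = j0 then a p else 0) :: 'a ^'n ^'n)"
      have e: "mat_star st (M p) ** M p = (\<chi> r c. if r = j0 \<and> c = j0 then st (a p) * a p else 0)" for p
      proof -
        have "(\<Sum>q\<in>UNIV. st (M p $ q $ r) * M p $ q $ c) =
              (if r = j0 \<and> c = j0 then st (a p) * a p else 0)" for r c
        proof -
          have "(\<Sum>q\<in>UNIV. st (M p $ q $ r) * M p $ q $ c) =
              (\<Sum>q\<in>UNIV. if q = j0 then (if r = j0 \<and> c = j0 then st (a p) * a p else 0) else 0)"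
            by (rule sum.cong) (auto simp: M_def st0)
          also have "\<dots> = (if r = j0 \<and> c = j0 then st (a p) * a p else 0)"
            by (simp only: sum.delta finite UNIV_I if_True)
          finally show ?thesis .
        qed
        thus ?thesis by (simp add: vec_eq_iff matrix_matrix_mult_def mat_star_def)
      qed
      have "(\<Sum>p<k. mat_star st (M p) ** M p) = 0"
        by (simp add: e vec_eq_iff sum_component s if_distrib sum.If_cases cong: if_cong)
      hence "M l = 0" using rr l unfolding real_reduced_wrt_def by blast
      hence "M l $ j0 $ j0 = 0" by simp
      thus "a l = 0" by (simp add: M_def)
    qed
  }
qed

end
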